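(* Let $s\ge1$ and let $\vec M=(M_1,\dots,M_n)$ be positive integers with $2M_i+1\equiv0\pmod{p^s}$ for all $i$. Then for all positive integers $l$ and $t$ with $t\le s$, the vector $I^{[lp^t-1]}(z,\vec M)\in\mathbb Z[z]^n$ is a solution of the KZ system modulo $p^t$.
   Context: Let $p$ be an odd prime, $g\ge1$, $n=2g+1$, with $p>n$. Write $z=(z_1,\dots,z_n)$. For $1\le i\ne j\le n$ let $\Omega_{ij}$ be the $n\times n$ matrix whose $(i,i)$ and $(j,j)$ entries are $-1$, whose $(i,j)$ and $(j,i)$ entries are $1$, and all of whose other entries are $0$. The KZ system is the system for a column vector $I=(I_1,\dots,I_n)$ of functions of $z$: $\frac{\partial I}{\partial z_i}=\frac12\sum_{j\ne i}\frac{\Omega_{ij}}{z_i-z_j}\,I$ for $i=1,\dots,n$, together with $I_1+\dots+I_n=0$. For a positive integer $s$ let $\pi_s$ denote reduction modulo $p^s$. A vector $I(z)\in\mathbb Z[z]^n$ is a solution of the KZ system modulo $p^s$ if $\pi_s I\in(\mathbb Z/p^s\mathbb Z)[z]^n$ satisfies the KZ system (the differential equations being understood in $(\mathbb Z/p^s\mathbb Z)[z]$ after multiplying the $i$-th equation by $\prod_{j\ne i}(z_i-z_j)$). For $\vec M=(M_1,\dots,M_n)$ put $\Phi(x,z,\vec M)=\prod_{i=1}^n(x-z_i)^{M_i}$, expand $\Big(\frac{\Phi(x,z,\vec M)}{x-z_1},\dots,\frac{\Phi(x,z,\vec M)}{x-z_n}\Big)=\sum_i P^i(z,\vec M)x^i$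 with $P^i(z,\vec M)\in\mathbb Z[z]^n$, and set $I^{[m-1]}(z,\vec M)=P^{m-1}(z,\vec M)$ for positive integers $m$. *)

theory Defs
  imports "HOL-Library.Poly_Mapping" "HOL-Computational_Algebra.Polynomial"
begin

text \<open>Multivariate polynomials in z_1, z_2, ... with integer coefficients:
  a monomial is a finitely supported exponent vector (finitely supported nat-to-nat map).\<close>
type_synonym mpoly = "(nat \<Rightarrow>\<^sub>0 nat) \<Rightarrow>\<^sub>0 int"

definition zvar :: "nat \<Rightarrow> mpoly" where
  "zvar i = Poly_Mapping.single (Poly_Mapping.single i 1) 1"

definition pdiff :: "nat \<Rightarrow> mpoly \<Rightarrow> mpoly" where
  "pdiff i f = (\<Sum>m\<in>Poly_Mapping.keys f. Poly_Mapping.single (m - Poly_Mapping.single i (1::nat))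
                                 (of_nat (Poly_Mapping.lookup m i) * Poly_Mapping.lookup f m))"

definition cong_mp :: "int \<Rightarrow> mpoly \<Rightarrow> mpoly \<Rightarrow> bool" where
  "cong_mp q f g \<longleftrightarrow> (\<forall>m. q dvd Poly_Mapping.lookup (f - g) m)"

definition Omega :: "nat \<Rightarrow> nat \<Rightarrow> nat \<Rightarrow> nat \<Rightarrow> int" where
  "Omega i k a b =
     (if a = b \<and> (a = i \<or> a = k) then -1
      else if (a = i \<and> b = k) \<or> (a = k \<and> b = i) then 1 else 0)"

text \<open>I (components I_1..I_n, given as I 1, ..., I n) solves the KZ system modulo q:
  the i-th equation multiplied by prod_{k<>i}(z_i - z_k) (and by 2, the inverse of 1/2,
  which is a unit modulo q for odd q), together with I_1+...+I_n = 0.\<close>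
definition KZ_sol_mod :: "nat \<Rightarrow> int \<Rightarrow> (nat \<Rightarrow> mpoly) \<Rightarrow> bool" where
  "KZ_sol_mod n q I \<longleftrightarrow>
     (\<forall>i\<in>{1..n}. \<forall>a\<in>{1..n}.
        cong_mp q
          (2 * (\<Prod>k\<in>{1..n}-{i}. zvar i - zvar k) * pdiff i (I a))
          (\<Sum>k\<in>{1..n}-{i}. (\<Prod>l\<in>{1..n}-{i,k}. zvar i - zvar l) *
                (\<Sum>b\<in>{1..n}. of_int (Omega i k a b) * I b)))
     \<and> cong_mp q (\<Sum>a\<in>{1..n}. I a) 0"

text \<open>Phi(x,z,M)/(x - z_j) = prod_i (x - z_i)^(M_i - delta_ij), as a polynomial in x
  with coefficients in Z[z]; M_j \<ge> 1 is assumed where used.\<close>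
definition Phi_div :: "nat \<Rightarrow> (nat \<Rightarrow> nat) \<Rightarrow> nat \<Rightarrow> mpoly poly" where
  "Phi_div n M j = (\<Prod>i\<in>{1..n}. [:- zvar i, 1:] ^ (if i = j then M i - 1 else M i))"

text \<open>I^{[m-1]}(z,M): the coefficient of x^(m-1), component j.\<close>
definition Ivec :: "nat \<Rightarrow> (nat \<Rightarrow> nat) \<Rightarrow> nat \<Rightarrow> nat \<Rightarrow> mpoly" where
  "Ivec n M m j = coeff (Phi_div n M j) (m - 1)"

end

theory Submission
  imports Defs
begin

lemma pdiff_superset:
  assumes "finite S" "Poly_Mapping.keys f \<subseteq> S"
  shows "pdiff i f = (\<Sum>m\<in>S. Poly_Mapping.single (m - Poly_Mapping.single i (1::nat))
                                 (of_nat (Poly_Mapping.lookup m i) * Poly_Mapping.lookup f m))"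
  unfolding pdiff_def
  by (rule sum.mono_neutral_left) (use assms in \<open>auto simp: in_keys_iff\<close>)

lemma pdiff_zero [simp]: "pdiff i 0 = 0"
  by (simp add: pdiff_def)

lemma pdiff_add: "pdiff i (f + g) = pdiff i f + pdiff i g"
proof -
  let ?S = "Poly_Mapping.keys f \<union> Poly_Mapping.keys g"
  have "finite ?S" by simp
  have k: "Poly_Mapping.keys (f + g) \<subseteq> ?S" by (rule keys_add)
  show ?thesis
    apply (subst pdiff_superset[OF \<open>finite ?S\<close> k])
    apply (subst pdiff_superset[of ?S f], simp, blast)
    apply (subst pdiff_superset[of ?S g], simp, blast)
    by (simp add: lookup_add distrib_left single_add sum.distrib)
qed

lemma pdiff_uminus: "pdiff i (- f) = - pdiff i f"
  unfolding pdiff_def by (simp add: single_uminus sum_negf)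

lemma pdiff_diff: "pdiff i (f - g) = pdiff i f - pdiff i g"
  using pdiff_add[of i f "-g"] by (simp add: pdiff_uminus)

lemma pdiff_sum: "pdiff i (sum h A) = (\<Sum>a\<in>A. pdiff i (h a))"
  by (induction A rule: infinite_finite_induct) (auto simp: pdiff_add)

lemma pdiff_single:
  "pdiff i (Poly_Mapping.single m c) =
     Poly_Mapping.single (m - Poly_Mapping.single i 1) (of_nat (Poly_Mapping.lookup m i) * c)"
  by (cases "c = 0") (auto simp: pdiff_def)

lemma mpoly_expand: "f = (\<Sum>m\<in>Poly_Mapping.keys f. Poly_Mapping.single m (Poly_Mapping.lookup f m))"
  by (rule poly_mapping_eqI) (auto simp: lookup_sum lookup_single when_def in_keys_iff)

lemma mono_sub_add:
  assumes "Poly_Mapping.lookup m i > (0::nat)"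
  shows "m - Poly_Mapping.single i 1 + m' = m + m' - Poly_Mapping.single i (1::nat)"
  by (rule poly_mapping_eqI) (use assms in \<open>auto simp: lookup_add lookup_minus lookup_single when_def\<close>)

lemma pdiff_mono_mult:
  "pdiff i (Poly_Mapping.single m a * Poly_Mapping.single m' b) =
     pdiff i (Poly_Mapping.single m a) * Poly_Mapping.single m' b + Poly_Mapping.single m a * pdiff i (Poly_Mapping.single m' b)"
proof -
  have e1: "Poly_Mapping.single (m - Poly_Mapping.single i 1 + m') (int (Poly_Mapping.lookup m i) * a * b)
        = Poly_Mapping.single (m + m' - Poly_Mapping.single i 1) (int (Poly_Mapping.lookup m i) * a * b)"
    using mono_sub_add[of m i m'] by (cases "Poly_Mapping.lookup m i = 0") auto
  have e2: "Poly_Mapping.single (m + (m' - Poly_Mapping.single i 1)) (a * (int (Poly_Mapping.lookup m' i) * b))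
        = Poly_Mapping.single (m + m' - Poly_Mapping.single i 1) (int (Poly_Mapping.lookup m' i) * a * b)"
    using mono_sub_add[of m' i m]
    by (cases "Poly_Mapping.lookup m' i = 0") (auto simp: ac_simps)
  show ?thesis
    apply (simp only: pdiff_single mult_single e1 e2 lookup_add of_nat_add single_add[symmetric])
    apply (rule arg_cong[where f="Poly_Mapping.single _"])
    by (simp add: algebra_simps)
qed

lemma pdiff_mult: "pdiff i (f * g) = pdiff i f * g + f * pdiff i g"
proof -
  have "pdiff i (f * g) = pdiff i ((\<Sum>m\<in>Poly_Mapping.keys f. Poly_Mapping.single m (Poly_Mapping.lookup f m)) *
       (\<Sum>m'\<in>Poly_Mapping.keys g. Poly_Mapping.single m' (Poly_Mapping.lookup g m')))"
    using mpoly_expand[of f] mpoly_expand[of g] by simp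
  also have "\<dots> = (\<Sum>m\<in>Poly_Mapping.keys f. \<Sum>m'\<in>Poly_Mapping.keys g.
      pdiff i (Poly_Mapping.single m (Poly_Mapping.lookup f m)) * Poly_Mapping.single m' (Poly_Mapping.lookup g m') +
      Poly_Mapping.single m (Poly_Mapping.lookup f m) * pdiff i (Poly_Mapping.single m' (Poly_Mapping.lookup g m')))"
    by (simp add: sum_distrib_left sum_distrib_right pdiff_sum pdiff_mono_mult sum.swap[where B="Poly_Mapping.keys g"])
  also have "\<dots> = pdiff i (\<Sum>m\<in>Poly_Mapping.keys f. Poly_Mapping.single m (Poly_Mapping.lookup f m)) *
       (\<Sum>m'\<in>Poly_Mapping.keys g. Poly_Mapping.single m' (Poly_Mapping.lookup g m')) +
      (\<Sum>m\<in>Poly_Mapping.keys f. Poly_Mapping.single m (Poly_Mapping.lookup f m)) *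
      pdiff i (\<Sum>m'\<in>Poly_Mapping.keys g. Poly_Mapping.single m' (Poly_Mapping.lookup g m'))"
    apply (simp add: sum_distrib_left sum_distrib_right pdiff_sum sum.distrib)
    by (simp add: sum.swap[where A="Poly_Mapping.keys f" and B="Poly_Mapping.keys g"])
  finally show ?thesis using mpoly_expand[of f, symmetric] mpoly_expand[of g, symmetric] by simp
qed

lemma pdiff_one [simp]: "pdiff i 1 = 0"
  using pdiff_single[of i 0 1] by simp

lemma pdiff_zvar: "pdiff i (zvar k) = (if k = i then 1 else 0)"
  by (auto simp: zvar_def pdiff_single lookup_single when_def)

definition LL :: "nat \<Rightarrow> mpoly poly" where "LL k = [:- zvar k, 1:]"
definition GG :: "nat \<Rightarrow> (nat \<Rightarrow> nat) \<Rightarrow> mpoly poly" where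
  "GG n e = (\<Prod>i\<in>{1..n}. LL i ^ e i)"
definition Dz :: "nat \<Rightarrow> mpoly poly \<Rightarrow> mpoly poly" where "Dz i p = map_poly (pdiff i) p"

lemma coeff_Dz: "coeff (Dz i p) n = pdiff i (coeff p n)"
  unfolding Dz_def by (simp add: coeff_map_poly)

lemma Dz_add: "Dz i (p + q) = Dz i p + Dz i q"
  by (rule poly_eqI) (simp add: coeff_Dz pdiff_add)

lemma Dz_mult: "Dz i (p * q) = Dz i p * q + p * Dz i q"
  by (rule poly_eqI) (simp add: coeff_Dz coeff_mult pdiff_sum pdiff_mult sum.distrib)

lemma Dz_LL: "Dz i (LL k) = (if k = i then -1 else 0)"
proof (rule poly_eqI)
  fix n show "coeff (Dz i (LL k)) n = coeff (if k = i then -1 else 0) n"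
    by (cases n) (auto simp: coeff_Dz LL_def pdiff_uminus pdiff_zvar coeff_pCons split: nat.split)
qed

lemma pderiv_LL: "pderiv (LL k) = 1"
  by (simp add: LL_def pderiv_pCons)

lemma deriv_prod_pow:
  fixes D :: "'a::comm_ring_1 \<Rightarrow> 'a"
  assumes add: "\<And>x y. D (x + y) = D x + D y" and mult: "\<And>x y. D (x*y) = D x * y + x * D y"
    and fin: "finite S"
  shows "D (\<Prod>k\<in>S. L k ^ e k) = (\<Sum>k\<in>S. of_nat (e k) * D (L k) * (\<Prod>l\<in>S. L l ^ (e(k := e k - 1)) l))"
  using fin
proof (induction S rule: finite_induct)
  have D1: "D 1 = 0" using mult[of 1 1] by simp
  have Dpow: "D (x ^ n) = of_nat n * D x * x ^ (n - 1)" for x and n :: nat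
  proof (induction n)
    case 0 then show ?case by (simp add: D1)
  next
    case (Suc n) then show ?case
      by (cases n) (simp_all add: mult algebra_simps)
  qed
  {
    case empty then show ?case by (simp add: D1)
  next
    case (insert a S)
    have p0: "(\<Prod>l\<in>S. L l ^ (e(a := e a - 1)) l) = (\<Prod>l\<in>S. L l ^ e l)"
      using insert(2) by (intro prod.cong) auto
    have p1: "(\<Prod>l\<in>insert a S. L l ^ (e(a := e a - 1)) l) = L a ^ (e a - 1) * (\<Prod>l\<in>S. L l ^ e l)"
      using insert p0 by (simp add: prod.insert)
    have p2: "(\<Prod>l\<in>insert a S. L l ^ (e(k := e k - 1)) l) = L a ^ e a * (\<Prod>l\<in>S. L l ^ (e(k := e k - 1)) l)"
      if "k \<in> S" for k
      using insert that by (auto simp: prod.insert)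
    have "D (\<Prod>k\<in>insert a S. L k ^ e k) = D (L a ^ e a) * (\<Prod>k\<in>S. L k ^ e k) + L a ^ e a * D (\<Prod>k\<in>S. L k ^ e k)"
      using insert by (simp add: mult)
    also have "\<dots> = of_nat (e a) * D (L a) * (L a ^ (e a - 1) * (\<Prod>l\<in>S. L l ^ e l)) +
        (\<Sum>k\<in>S. of_nat (e k) * D (L k) * (L a ^ e a * (\<Prod>l\<in>S. L l ^ (e(k := e k - 1)) l)))"
      using insert by (simp only: Dpow) (simp add: sum_distrib_left algebra_simps del: fun_upd_apply)
    also have "\<dots> = (\<Sum>k\<in>insert a S. of_nat (e k) * D (L k) * (\<Prod>l\<in>insert a S. L l ^ (e(k := e k - 1)) l))"
      apply (simp only: sum.insert[OF insert(1,2)] p1)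
      apply (rule arg_cong[where f="\<lambda>x. _ + x"])
      by (rule sum.cong) (simp_all only: p2)
    finally show ?case .
  }
qed

lemma sum_if_single:
  assumes "finite S" "i \<in> S"
  shows "(\<Sum>k\<in>S. f k * (if k = i then c else 0) * g k) = f i * c * (g i :: 'a::comm_ring_1)"
  using assms by (subst sum.remove[of S i]) (auto intro!: sum.neutral)

lemma Dz_GG: "i \<in> {1..n} \<Longrightarrow> Dz i (GG n e) = - (of_nat (e i) * GG n (e(i := e i - 1)))"
  unfolding GG_def
  apply (subst deriv_prod_pow[where D="Dz i"])
     apply (rule Dz_add)
    apply (rule Dz_mult)
   apply simp
  apply (simp only: Dz_LL)
  apply (subst sum_if_single)
  by auto

lemma pderiv_GG: "pderiv (GG n e) = (\<Sum>k\<in>{1..n}. of_nat (e k) * GG n (e(k := e k - 1)))"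
  unfolding GG_def
  by (subst deriv_prod_pow[where D=pderiv]) (auto simp: pderiv_add pderiv_mult pderiv_LL algebra_simps)

lemma GG_factor: "j \<in> {1..n} \<Longrightarrow> e j = Suc c \<Longrightarrow> GG n e = LL j * GG n (e(j := c))"
  unfolding GG_def
  apply (subst (1 2) prod.remove[of "{1..n}" j], simp, simp)
  by (auto intro!: prod.cong)

lemma lookup_of_int_mult: "Poly_Mapping.lookup (of_int q * (h::mpoly)) m = q * Poly_Mapping.lookup h m"
proof -
  have "(of_int q :: mpoly) * h = Poly_Mapping.map ((*) q) h"
    by (simp add: mult_map_scale_conv_mult single_of_int[symmetric] del: single_of_int)
  then show ?thesis by (simp add: Poly_Mapping.map.rep_eq when_def)
qed

lemma cong_of_dvd: "(of_int q :: mpoly) dvd (f - g) \<Longrightarrow> cong_mp q f g"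
  unfolding cong_mp_def by (auto elim!: dvdE simp: lookup_of_int_mult)

lemma of_int_dvd_mp: "q dvd x \<Longrightarrow> (of_int q :: mpoly) dvd of_int x"
  by (auto elim!: dvdE)

lemma coeff_of_nat_mult: "coeff (of_nat c * p) k = of_nat c * coeff p k"
  by (simp add: of_nat_poly)

lemma coeff_const_mult: "coeff ([:c:] * p) k = c * coeff p k"
  by simp

lemma Ivec_GG: "Ivec n M m j = coeff (GG n (\<lambda>i. if i = j then M i - 1 else M i)) (m - 1)"
  by (simp add: Ivec_def Phi_div_def GG_def LL_def)

lemma main_KZ:
  fixes q :: int and m n :: nat and M :: "nat \<Rightarrow> nat"
  assumes hM: "\<forall>k\<in>{1..n}. M k > 0"
    and hq: "\<forall>k\<in>{1..n}. q dvd int (2 * M k + 1)"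
    and hm: "q dvd int m" and m0: "m > 0"
  shows "KZ_sol_mod n q (Ivec n M m)"
proof -
  define N where "N = {1..n}"
  define Q where "Q = (of_int q :: mpoly)"
  define cc where "cc X = coeff X (m - 1)" for X :: "mpoly poly"
  define E where "E j = (\<lambda>k. if k = j then M k - 1 else M k)" for j
  define I where "I = Ivec n M m"
  have I_eq: "I j = cc (GG n (E j))" for j
    by (simp add: I_def Ivec_GG cc_def E_def)
  have finN: "finite N" by (simp add: N_def)
  have QM: "Q dvd of_nat (2 * M k + 1)" if "k \<in> N" for k
    using of_int_dvd_mp[of q "int (2 * M k + 1)"] hq that by (simp add: Q_def N_def)
  have Qm: "Q dvd of_nat m"
    using of_int_dvd_mp[OF hm] by (simp add: Q_def)
  have ccd: "cc (pderiv X) = of_nat m * coeff X m" for X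
    using m0 by (simp add: cc_def coeff_pderiv)
  have ofM: "(of_nat (2 * M k + 1) :: mpoly) = 2 * of_nat (M k) + 1" for k by simp
  have sumpart: "cong_mp q (\<Sum>a\<in>N. I a) 0"
  proof -
    have EM: "M(k := M k - 1) = E k" for k by (auto simp: E_def fun_eq_iff)
    have "pderiv (GG n M) = (\<Sum>k\<in>N. of_nat (M k) * GG n (E k))"
      by (simp only: pderiv_GG EM N_def)
    then have "of_nat m * coeff (GG n M) m = (\<Sum>k\<in>N. of_nat (M k) * I k)"
      by (simp add: ccd[symmetric] I_eq cc_def coeff_sum coeff_of_nat_mult)
    then have eq: "(\<Sum>a\<in>N. I a) = (\<Sum>a\<in>N. of_nat (2 * M a + 1) * I a) - 2 * (of_nat m * coeff (GG n M) m)"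
      by (simp add: ofM algebra_simps sum.distrib sum_distrib_left)
    have "Q dvd (\<Sum>a\<in>N. I a) - 0"
      unfolding eq diff_zero
      apply (rule dvd_diff)
       apply (rule dvd_sum, rule dvd_mult2, erule QM)
      by (rule dvd_mult, rule dvd_mult2, rule Qm)
    then show ?thesis unfolding Q_def by (rule cong_of_dvd)
  qed
  have eqpart: "cong_mp q (2 * (\<Prod>k\<in>N-{i}. zvar i - zvar k) * pdiff i (I a))
          (\<Sum>k\<in>N-{i}. (\<Prod>l\<in>N-{i,k}. zvar i - zvar l) *
                (\<Sum>b\<in>N. of_int (Omega i k a b) * I b))"
    if iN: "i \<in> N" and aN: "a \<in> N" for i a
  proof -
    define P where "P = (\<Prod>k\<in>N-{i}. zvar i - zvar k)"
    define Pk where "Pk k = (\<Prod>l\<in>N-{i,k}. zvar i - zvar l)" for k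
    define R where "R k = GG n (\<lambda>l. if l = i \<or> l = k then M l - 1 else M l)" for k
    have iN': "i \<in> {1..n}" using iN by (simp add: N_def)
    have hP: "P = (zvar i - zvar k) * Pk k" if "k \<in> N" "k \<noteq> i" for k
    proof -
      have "N - {i} - {k} = N - {i,k}" by auto
      then show ?thesis unfolding P_def Pk_def
        using that finN by (subst prod.remove[of "N-{i}" k]) auto
    qed
    have hEk: "GG n (E k) = LL i * R k" if "k \<in> N" "k \<noteq> i" for k
    proof -
      have "M i > 0" using hM iN by (simp add: N_def)
      then have "E k i = Suc (M i - 1)" using that by (simp add: E_def)
      moreover have "(E k)(i := M i - 1) = (\<lambda>l. if l = i \<or> l = k then M l - 1 else M l)"
        by (auto simp: E_def fun_eq_iff)
      ultimately show ?thesis unfolding R_def using GG_factor[OF iN'] by metis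
    qed
    have hEi: "GG n (E i) = LL k * R k" if "k \<in> N" "k \<noteq> i" for k
    proof -
      have kN': "k \<in> {1..n}" using that by (simp add: N_def)
      have "M k > 0" using hM that by (simp add: N_def)
      then have "E i k = Suc (M k - 1)" using that by (simp add: E_def)
      moreover have "(E i)(k := M k - 1) = (\<lambda>l. if l = i \<or> l = k then M l - 1 else M l)"
        by (auto simp: E_def fun_eq_iff)
      ultimately show ?thesis unfolding R_def using GG_factor[OF kN'] by metis
    qed
    have hdiff: "I i - I k = (zvar i - zvar k) * cc (R k)" if "k \<in> N" "k \<noteq> i" for k
    proof -
      have "LL k * R k - LL i * R k = [:zvar i - zvar k:] * R k"
        by (simp add: LL_def left_diff_distrib[symmetric] smult_diff_left)
      then show ?thesis
        using that by (simp add: I_eq hEk hEi cc_def coeff_diff[symmetric] del: coeff_diff)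
    qed
    have pdI: "pdiff i (I j) = - (of_nat (E j i) * cc (GG n ((E j)(i := E j i - 1))))" for j
      by (simp only: I_eq cc_def coeff_Dz[symmetric] Dz_GG[OF iN'] coeff_minus coeff_of_nat_mult)
    show ?thesis
    proof (cases "a = i")
      case False
      have inner: "(\<Sum>b\<in>N. of_int (Omega i k a b) * I b) = (if k = a then I i - I a else 0)"
        if "k \<in> N - {i}" for k
      proof (cases "k = a")
        case True
        have "(\<Sum>b\<in>N. of_int (Omega i k a b) * I b) =
              (\<Sum>b\<in>N. (if b = a then - I b else 0) + (if b = i then I b else 0))"
          by (rule sum.cong) (use True False in \<open>auto simp: Omega_def\<close>)
        also have "\<dots> = I i - I a" using aN iN finN by (simp add: sum.distrib)
        finally show ?thesis using True by simp
      next
        case F2: False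
        have "(\<Sum>b\<in>N. of_int (Omega i k a b) * I b) = 0"
          by (rule sum.neutral) (use False F2 in \<open>auto simp: Omega_def\<close>)
        then show ?thesis using F2 by simp
      qed
      have rhs: "(\<Sum>k\<in>N-{i}. Pk k * (\<Sum>b\<in>N. of_int (Omega i k a b) * I b)) = Pk a * (I i - I a)"
      proof -
        have "(\<Sum>k\<in>N-{i}. Pk k * (\<Sum>b\<in>N. of_int (Omega i k a b) * I b)) =
              (\<Sum>k\<in>N-{i}. if k = a then Pk k * (I i - I a) else 0)"
          by (rule sum.cong) (auto simp: inner)
        also have "\<dots> = Pk a * (I i - I a)" using aN False finN by simp
        finally show ?thesis .
      qed
      have Ea: "E a i = M i" using False by (simp add: E_def)
      have Ea2: "(E a)(i := E a i - 1) = (\<lambda>l. if l = i \<or> l = a then M l - 1 else M l)"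
        using False by (auto simp: E_def fun_eq_iff)
      have pd: "pdiff i (I a) = - (of_nat (M i) * cc (R a))"
        unfolding pdI R_def by (subst Ea2, subst Ea, rule refl)
      have "2 * P * pdiff i (I a) - (\<Sum>k\<in>N-{i}. Pk k * (\<Sum>b\<in>N. of_int (Omega i k a b) * I b))
            = - (of_nat (2 * M i + 1) * ((zvar i - zvar a) * Pk a * cc (R a)))"
        unfolding rhs pd hdiff[OF aN False] hP[OF aN False]
        by (simp add: algebra_simps)
      moreover have "Q dvd - (of_nat (2 * M i + 1) * ((zvar i - zvar a) * Pk a * cc (R a)))"
        by (rule dvd_minus_iff[THEN iffD2], rule dvd_mult2, rule QM[OF iN])
      ultimately show ?thesis unfolding P_def Pk_def Q_def by (intro cong_of_dvd) simp
    next
      case True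
      have inner: "Pk k * (\<Sum>b\<in>N. of_int (Omega i k i b) * I b) = - (P * cc (R k))"
        if kN: "k \<in> N - {i}" for k
      proof -
        have "(\<Sum>b\<in>N. of_int (Omega i k i b) * I b) =
              (\<Sum>b\<in>N. (if b = i then - I b else 0) + (if b = k then I b else 0))"
          by (rule sum.cong) (use kN in \<open>auto simp: Omega_def\<close>)
        also have "\<dots> = - (I i - I k)" using kN iN finN by (simp add: sum.distrib)
        finally have e: "(\<Sum>b\<in>N. of_int (Omega i k i b) * I b) = - (I i - I k)" .
        have k1: "k \<in> N" and k2: "k \<noteq> i" using kN by auto
        show ?thesis unfolding e hdiff[OF k1 k2] hP[OF k1 k2] by (simp add: algebra_simps)
      qed
      define T0 where "T0 = (E i)(i := E i i - 1)"
      define S1 where "S1 = (\<Sum>k\<in>N-{i}. cc (R k))"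
      define S2 where "S2 = (\<Sum>k\<in>N-{i}. of_nat (M k) * cc (R k))"
      define C where "C = coeff (GG n (E i)) m"
      have rhs: "(\<Sum>k\<in>N-{i}. Pk k * (\<Sum>b\<in>N. of_int (Omega i k i b) * I b)) = - (P * S1)"
        by (subst sum.cong[OF refl inner]) (simp_all add: S1_def sum_negf sum_distrib_left)
      have pd: "pdiff i (I i) = - (of_nat (M i - 1) * cc (GG n T0))"
        unfolding pdI T0_def by (simp add: E_def)
      have Ek: "(E i)(k := E i k - 1) = (\<lambda>l. if l = i \<or> l = k then M l - 1 else M l)"
        if "k \<noteq> i" for k
        using that by (auto simp: E_def fun_eq_iff)
      have pdsplit: "pderiv (GG n (E i)) = of_nat (M i - 1) * GG n T0 + (\<Sum>k\<in>N-{i}. of_nat (M k) * R k)"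
      proof -
        have "pderiv (GG n (E i)) = (\<Sum>k\<in>N. of_nat (E i k) * GG n ((E i)(k := E i k - 1)))"
          by (simp only: pderiv_GG N_def)
        also have "\<dots> = of_nat (E i i) * GG n ((E i)(i := E i i - 1)) +
            (\<Sum>k\<in>N-{i}. of_nat (E i k) * GG n ((E i)(k := E i k - 1)))"
          by (rule sum.remove[OF finN iN])
        also have "\<dots> = of_nat (M i - 1) * GG n T0 + (\<Sum>k\<in>N-{i}. of_nat (M k) * R k)"
        proof (rule arg_cong2[where f="(+)"])
          show "of_nat (E i i) * GG n ((E i)(i := E i i - 1)) = of_nat (M i - 1) * GG n T0"
            unfolding T0_def by (simp add: E_def)
          show "(\<Sum>k\<in>N-{i}. of_nat (E i k) * GG n ((E i)(k := E i k - 1))) = (\<Sum>k\<in>N-{i}. of_nat (M k) * R k)"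
          proof (rule sum.cong)
            fix k assume "k \<in> N - {i}"
            then have "k \<noteq> i" by simp
            then show "of_nat (E i k) * GG n ((E i)(k := E i k - 1)) = of_nat (M k) * R k"
              by (subst Ek) (auto simp: R_def E_def)
          qed simp
        qed
        finally show ?thesis .
      qed
      have mC: "of_nat m * C = of_nat (M i - 1) * cc (GG n T0) + S2"
        using arg_cong[OF pdsplit, of cc, unfolded ccd]
        by (simp add: C_def S2_def cc_def coeff_sum coeff_of_nat_mult)
      have S3: "(\<Sum>k\<in>N-{i}. of_nat (2 * M k + 1) * cc (R k)) = 2 * S2 + S1"
        by (simp add: S1_def S2_def sum.distrib sum_distrib_left algebra_simps)
      have "2 * P * pdiff i (I a) - (\<Sum>k\<in>N-{i}. Pk k * (\<Sum>b\<in>N. of_int (Omega i k a b) * I b))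
            = P * (\<Sum>k\<in>N-{i}. of_nat (2 * M k + 1) * cc (R k)) - 2 * P * (of_nat m * C)"
        unfolding True rhs pd S3 mC by (simp add: algebra_simps)
      moreover have "Q dvd P * (\<Sum>k\<in>N-{i}. of_nat (2 * M k + 1) * cc (R k)) - 2 * P * (of_nat m * C)"
        apply (rule dvd_diff)
         apply (rule dvd_mult, rule dvd_sum, rule dvd_mult2, rule QM, simp)
        by (rule dvd_mult, rule dvd_mult2, rule Qm)
      ultimately show ?thesis unfolding P_def Pk_def Q_def by (intro cong_of_dvd) simp
    qed
  qed
  show ?thesis
    unfolding KZ_sol_mod_def I_def[symmetric] N_def[symmetric]
    using eqpart sumpart by blast
qed

theorem theorem5p1:
  fixes p g s l t :: nat and M :: "nat \<Rightarrow> nat"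
  assumes "prime p" and "odd p" and "g \<ge> 1" and "p > 2 * g + 1"
    and "s \<ge> 1"
    and "\<forall>i\<in>{1..2 * g + 1}. M i > 0 \<and> p ^ s dvd 2 * M i + 1"
    and "l > 0" and "t > 0" and "t \<le> s"
  shows "KZ_sol_mod (2 * g + 1) (int p ^ t) (Ivec (2 * g + 1) M (l * p ^ t))"
proof (rule main_KZ)
  show "\<forall>k\<in>{1..2 * g + 1}. 0 < M k" using assms(6) by blast
  have pt: "p ^ t dvd p ^ s" using assms(9) by (rule le_imp_power_dvd)
  show "\<forall>k\<in>{1..2 * g + 1}. int p ^ t dvd int (2 * M k + 1)"
  proof
    fix k assume "k \<in> {1..2 * g + 1}"
    then have "p ^ t dvd 2 * M k + 1" using assms(6) pt dvd_trans by blast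
    then have "int (p ^ t) dvd int (2 * M k + 1)" by (simp only: of_nat_dvd_iff)
    then show "int p ^ t dvd int (2 * M k + 1)" by simp
  qed
  show "int p ^ t dvd int (l * p ^ t)" by simp
  have "p > 0" using assms(1) prime_gt_0_nat by blast
  then show "l * p ^ t > 0" using assms(7) by simp
qed

end
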